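(* In the affine setting described in the context, let $\sigma\in(0,1]$ and let $f,\alpha,s:I^q\to\mathbb{R}$ be Hölder continuous with exponent $\sigma$, with $s(x_{1,j_1},\dots,x_{q,j_q})=f(x_{1,j_1},\dots,x_{q,j_q})$ for all $(j_1,\dots,j_q)\in\prod_{k=1}^q\{0,M_k\}$. Let $a=\min\{|a_{k,i}|:1\le k\le q,\ 1\le i\le M_k\}$ and suppose $\max\big\{\|\alpha\|_\infty/a^\sigma,\ \|\alpha\|\big\}<1$, where $\|\alpha\|=\|\alpha\|_\infty+[\alpha]_\sigma$. Then the $\alpha$-fractal function $f^\alpha$ is Hölder continuous with exponent $\sigma$. Moreover, $$q\le\dim_H\mathcal{G}(f^\alpha)\le\underline{\dim}_B\mathcal{G}(f^\alpha)\le\overline{\dim}_B\mathcal{G}(f^\alpha)\le q+1-\sigma.$$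
   Context: Affine setting: $I=[0,1]$; for each $k\in\{1,\dots,q\}$, $M_k\ge2$ and $0=x_{k,0}<\dots<x_{k,M_k}=1$, $I_{k,i}=[x_{k,i-1},x_{k,i}]$. For $1\le i\le M_k$, $u_{k,i}:I\to I_{k,i}$ is affine, $u_{k,i}(x)=a_{k,i}x+b_{k,i}$, with $a_{k,i}=x_{k,i}-x_{k,i-1}$, $b_{k,i}=x_{k,i-1}$ if $i$ is odd and $a_{k,i}=x_{k,i-1}-x_{k,i}$, $b_{k,i}=x_{k,i}$ if $i$ is even. For $i=(i_1,\dots,i_q)$, $u_i(y)=(u_{1,i_1}(y_1),\dots,u_{q,i_q}(y_q))$. Given $f,\alpha,s\in\mathcal{C}(I^q)$ with $\|\alpha\|_\infty<1$ and $s=f$ at the vertices of $I^q$, the $\alpha$-fractal function $f^\alpha$ is the unique continuous $f^\alpha:I^q\to\mathbb{R}$ with $f^\alpha(x)=f(x)+\alpha(x)[f^\alpha(u_i^{-1}(x))-s(u_i^{-1}(x))]$ for all $i\in\prod_k\{1,\dots,M_k\}$ and $x\in\prod_k I_{k,i_k}$. Hölder: $|h(x)-h(y)|\le K\|x-y\|_2^\sigma$; $[h]_\sigma=\sup_{x\ne y}|h(x)-h(y)|/\|x-y\|_2^\sigma$. $\mathcal{G}(g)=\{(x,g(x)):x\in I^q\}$; $\dim_H,\underline{\dim}_B,\overline{\dim}_B$ are Hausdorff, lower box, upper box dimension. *)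

theory Defs
  imports "HOL-Analysis.Analysis"
begin

text \<open>Partition data: for each coordinate k (index type 'q, so q = CARD('q)),
  M k is the number of subintervals and xs k i (0 <= i <= M k) are the nodes.\<close>

definition partition_data :: "('q::finite \<Rightarrow> nat) \<Rightarrow> ('q \<Rightarrow> nat \<Rightarrow> real) \<Rightarrow> bool" where
  "partition_data M xs \<longleftrightarrow>
     (\<forall>k. 2 \<le> M k \<and> xs k 0 = 0 \<and> xs k (M k) = 1 \<and>
          (\<forall>i < M k. xs k i < xs k (Suc i)))"

definition acoef :: "('q \<Rightarrow> nat \<Rightarrow> real) \<Rightarrow> 'q \<Rightarrow> nat \<Rightarrow> real" where
  "acoef xs k i = (if odd i then xs k i - xs k (i - 1) else xs k (i - 1) - xs k i)"

definition bcoef :: "('q \<Rightarrow> nat \<Rightarrow> real) \<Rightarrow> 'q \<Rightarrow> nat \<Rightarrow> real" where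
  "bcoef xs k i = (if odd i then xs k (i - 1) else xs k i)"

definition uk :: "('q \<Rightarrow> nat \<Rightarrow> real) \<Rightarrow> 'q \<Rightarrow> nat \<Rightarrow> real \<Rightarrow> real" where
  "uk xs k i t = acoef xs k i * t + bcoef xs k i"

definition uinv :: "('q::finite \<Rightarrow> nat \<Rightarrow> real) \<Rightarrow> ('q \<Rightarrow> nat) \<Rightarrow> real^'q \<Rightarrow> real^'q" where
  "uinv xs i y = (\<chi> k. (y $ k - bcoef xs k (i k)) / acoef xs k (i k))"

definition cell :: "('q::finite \<Rightarrow> nat \<Rightarrow> real) \<Rightarrow> ('q \<Rightarrow> nat) \<Rightarrow> (real^'q) set" where
  "cell xs i = {y. \<forall>k. xs k (i k - 1) \<le> y $ k \<and> y $ k \<le> xs k (i k)}"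

definition unit_cube :: "(real^'q::finite) set" where
  "unit_cube = cbox 0 1"

definition is_alpha_fractal ::
  "('q::finite \<Rightarrow> nat) \<Rightarrow> ('q \<Rightarrow> nat \<Rightarrow> real) \<Rightarrow> (real^'q \<Rightarrow> real) \<Rightarrow> (real^'q \<Rightarrow> real)
     \<Rightarrow> (real^'q \<Rightarrow> real) \<Rightarrow> (real^'q \<Rightarrow> real) \<Rightarrow> bool" where
  "is_alpha_fractal M xs f \<alpha> s g \<longleftrightarrow>
     continuous_on unit_cube g \<and>
     (\<forall>i. (\<forall>k. 1 \<le> i k \<and> i k \<le> M k) \<longrightarrow>
        (\<forall>y \<in> cell xs i. g y = f y + \<alpha> y * (g (uinv xs i y) - s (uinv xs i y))))"

definition holder_on :: "real \<Rightarrow> ('a::metric_space) set \<Rightarrow> ('a \<Rightarrow> real) \<Rightarrow> bool" where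
  "holder_on \<sigma> S h \<longleftrightarrow> (\<exists>K. \<forall>x\<in>S. \<forall>y\<in>S. \<bar>h x - h y\<bar> \<le> K * dist x y powr \<sigma>)"

definition holder_seminorm :: "real \<Rightarrow> ('a::metric_space) set \<Rightarrow> ('a \<Rightarrow> real) \<Rightarrow> real" where
  "holder_seminorm \<sigma> S h = (SUP (x,y) \<in> {(x,y). x \<in> S \<and> y \<in> S \<and> x \<noteq> y}. \<bar>h x - h y\<bar> / dist x y powr \<sigma>)"

definition sup_norm_on :: "'a set \<Rightarrow> ('a \<Rightarrow> real) \<Rightarrow> real" where
  "sup_norm_on S h = (SUP x\<in>S. \<bar>h x\<bar>)"

definition hausdorff_content :: "real \<Rightarrow> real \<Rightarrow> ('a::metric_space) set \<Rightarrow> ennreal" where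
  "hausdorff_content s \<delta> E =
     Inf {(\<Sum>n. ennreal (diameter (U n) powr s)) | U :: nat \<Rightarrow> 'a set.
            E \<subseteq> (\<Union>n. U n) \<and> (\<forall>n. bounded (U n) \<and> diameter (U n) \<le> \<delta>)}"

definition hausdorff_measure :: "real \<Rightarrow> ('a::metric_space) set \<Rightarrow> ennreal" where
  "hausdorff_measure s E = (SUP \<delta>\<in>{0<..}. hausdorff_content s \<delta> E)"

definition hausdorff_dim :: "('a::metric_space) set \<Rightarrow> ereal" where
  "hausdorff_dim E = Inf {ereal s | s. 0 < s \<and> hausdorff_measure s E = 0}"

definition cover_number :: "real \<Rightarrow> ('a::metric_space) set \<Rightarrow> nat" where
  "cover_number \<delta> E = (LEAST n. \<exists>F. finite F \<and> card F = n \<and> E \<subseteq> \<Union>F \<and>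
                                  (\<forall>U\<in>F. bounded U \<and> diameter U \<le> \<delta>))"

definition lower_box_dim :: "('a::metric_space) set \<Rightarrow> ereal" where
  "lower_box_dim E = Liminf (at_right 0) (\<lambda>\<delta>. ereal (ln (real (cover_number \<delta> E)) / - ln \<delta>))"

definition upper_box_dim :: "('a::metric_space) set \<Rightarrow> ereal" where
  "upper_box_dim E = Limsup (at_right 0) (\<lambda>\<delta>. ereal (ln (real (cover_number \<delta> E)) / - ln \<delta>))"

definition graph_of :: "'a set \<Rightarrow> ('a \<Rightarrow> 'b) \<Rightarrow> ('a \<times> 'b) set" where
  "graph_of S g = {(x, g x) | x. x \<in> S}"

end

theory Submission
  imports Defs
begin

lemma pd_M2: "partition_data M xs \<Longrightarrow> 2 \<le> M k" unfolding partition_data_def by blast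
lemma pd_0: "partition_data M xs \<Longrightarrow> xs k 0 = 0" unfolding partition_data_def by blast
lemma pd_1: "partition_data M xs \<Longrightarrow> xs k (M k) = 1" unfolding partition_data_def by blast
lemma pd_step: "partition_data M xs \<Longrightarrow> i < M k \<Longrightarrow> xs k i < xs k (Suc i)" unfolding partition_data_def by blast

lemma part_mono:
  assumes "partition_data M xs" "i \<le> j" "j \<le> M k"
  shows "xs k i \<le> xs k j"
  using assms(2,3)
proof (induction j)
  case 0 then show ?case by simp
next
  case (Suc j)
  show ?case
  proof (cases "i = Suc j")
    case True then show ?thesis by simp
  next
    case False
    then have "i \<le> j" using Suc by simp
    moreover have "xs k j < xs k (Suc j)" using pd_step[OF assms(1)] Suc.prems by simp
    ultimately show ?thesis using Suc by force
  qed
qed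

lemma part_bounds:
  assumes "partition_data M xs" "i \<le> M k"
  shows "0 \<le> xs k i" "xs k i \<le> 1"
  using part_mono[OF assms(1), of 0 i k] part_mono[OF assms(1), of i "M k" k] assms pd_0[OF assms(1)] pd_1[OF assms(1)]
  by auto

lemma acoef_abs:
  assumes "partition_data M xs" "1 \<le> i" "i \<le> M k"
  shows "\<bar>acoef xs k i\<bar> = xs k i - xs k (i - 1)" "xs k (i - 1) < xs k i"
proof -
  have "xs k (i - 1) < xs k (Suc (i - 1))" using pd_step[OF assms(1), of "i - 1" k] assms by simp
  then show lt: "xs k (i - 1) < xs k i" using assms by simp
  then show "\<bar>acoef xs k i\<bar> = xs k i - xs k (i - 1)" unfolding acoef_def by auto
qed

definition amin where "amin M xs = Min {\<bar>acoef xs k i\<bar> | k i. 1 \<le> i \<and> i \<le> M k}"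

lemma amin_set_eq: "{\<bar>acoef xs k i\<bar> | k i. 1 \<le> i \<and> i \<le> M k} = (\<Union>k. (\<lambda>i. \<bar>acoef xs k i\<bar>) ` {1..M k})"
proof (rule set_eqI)
  fix x show "x \<in> {\<bar>acoef xs k i\<bar> | k i. 1 \<le> i \<and> i \<le> M k} \<longleftrightarrow> x \<in> (\<Union>k. (\<lambda>i. \<bar>acoef xs k i\<bar>) ` {1..M k})"
  proof
    assume "x \<in> {\<bar>acoef xs k i\<bar> | k i. 1 \<le> i \<and> i \<le> M k}"
    then obtain k i where "x = \<bar>acoef xs k i\<bar>" "1 \<le> i" "i \<le> M k" by blast
    then show "x \<in> (\<Union>k. (\<lambda>i. \<bar>acoef xs k i\<bar>) ` {1..M k})" by (intro UN_I[of k] imageI[THEN rev_image_eqI]) (auto intro!: image_eqI[of _ _ i])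
  next
    assume "x \<in> (\<Union>k. (\<lambda>i. \<bar>acoef xs k i\<bar>) ` {1..M k})"
    then obtain k i where "x = \<bar>acoef xs k i\<bar>" "1 \<le> i" "i \<le> M k" by auto
    then show "x \<in> {\<bar>acoef xs k i\<bar> | k i. 1 \<le> i \<and> i \<le> M k}" by blast
  qed
qed

lemma amin_props:
  fixes M :: "'q::finite \<Rightarrow> nat"
  assumes "partition_data M xs"
  shows "0 < amin M xs" "amin M xs \<le> 1"
    "\<And>k i. 1 \<le> i \<Longrightarrow> i \<le> M k \<Longrightarrow> amin M xs \<le> \<bar>acoef xs k i\<bar>"
proof -
  let ?S = "{\<bar>acoef xs k i\<bar> | k i. 1 \<le> i \<and> i \<le> M k}"
  have fin: "finite ?S" unfolding amin_set_eq by auto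
  obtain k0 :: 'q where True by auto
  have M2: "2 \<le> M k0" using pd_M2[OF assms] .
  have ne: "\<bar>acoef xs k0 1\<bar> \<in> ?S" using M2 by (intro CollectI exI[of _ k0] exI[of _ 1]) simp
  show "\<And>k i. 1 \<le> i \<Longrightarrow> i \<le> M k \<Longrightarrow> amin M xs \<le> \<bar>acoef xs k i\<bar>"
    unfolding amin_def using fin by (intro Min_le) blast+
  have "amin M xs \<in> ?S" unfolding amin_def using fin ne by (intro Min_in) blast+
  then obtain k i where ki: "1 \<le> i" "i \<le> M k" "amin M xs = \<bar>acoef xs k i\<bar>" by blast
  then show "0 < amin M xs" using acoef_abs[OF assms ki(1,2)] by simp
  have "amin M xs \<le> \<bar>acoef xs k0 1\<bar>" unfolding amin_def using fin ne by (intro Min_le)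
  also have "\<dots> = xs k0 1 - xs k0 0" using acoef_abs[OF assms, of 1 k0] M2 by simp
  also have "\<dots> \<le> 1" using part_bounds[OF assms, of 1 k0] M2 pd_0[OF assms] by simp
  finally show "amin M xs \<le> 1" .
qed

lemma locate:
  assumes "partition_data M xs" "0 \<le> t" "t \<le> 1"
  shows "\<exists>i. 1 \<le> i \<and> i \<le> M k \<and> xs k (i - 1) \<le> t \<and> t \<le> xs k i"
proof -
  have ex: "t \<le> xs k (M k)" using assms pd_1[OF assms(1)] by simp
  define j where "j = (LEAST j. t \<le> xs k j)"
  have tj: "t \<le> xs k j" unfolding j_def using ex by (rule LeastI)
  have jM: "j \<le> M k" unfolding j_def using ex by (rule Least_le)
  show ?thesis
  proof (cases "j = 0")
    case True
    then have "t = 0" using tj assms pd_0[OF assms(1)] by simp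
    moreover have "2 \<le> M k" using pd_M2[OF assms(1)] .
    moreover have "0 \<le> xs k 1" using part_bounds[OF assms(1), of 1 k] \<open>2 \<le> M k\<close> by simp
    ultimately show ?thesis using pd_0[OF assms(1)] by (intro exI[of _ 1]) simp
  next
    case False
    have "j - 1 < j" using False by simp
    then have "\<not> t \<le> xs k (j - 1)" unfolding j_def by (rule not_less_Least)
    then show ?thesis using False jM tj by (intro exI[of _ j]) auto
  qed
qed



definition vk where "vk xs k i t = (t - bcoef xs k i) / acoef xs k i"

lemma uinv_nth: "uinv xs i y $ k = vk xs k (i k) (y $ k)"
  by (simp add: uinv_def vk_def)

lemma v_range:
  assumes pd: "partition_data M xs" and i: "1 \<le> i" "i \<le> M k" and t: "xs k (i - 1) \<le> t" "t \<le> xs k i"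
  shows "0 \<le> vk xs k i t \<and> vk xs k i t \<le> 1"
proof -
  have lt: "xs k (i - 1) < xs k i" using acoef_abs[OF pd i] by simp
  show ?thesis
  proof (cases "odd i")
    case True
    then show ?thesis using lt t by (simp add: vk_def acoef_def bcoef_def divide_simps)
  next
    case False
    have e: "(t - xs k i) / (xs k (i - 1) - xs k i) = (xs k i - t) / (xs k i - xs k (i - 1))"
      by (simp add: divide_simps) (simp add: algebra_simps)
    show ?thesis using False lt t by (simp add: vk_def acoef_def bcoef_def e divide_simps)
  qed
qed

lemma v_same:
  assumes pd: "partition_data M xs" and i: "1 \<le> i" "i \<le> M k"
  shows "\<bar>vk xs k i s - vk xs k i t\<bar> \<le> \<bar>s - t\<bar> / amin M xs"
proof -
  have a: "amin M xs \<le> \<bar>acoef xs k i\<bar>" using amin_props(3)[OF pd i] .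
  have ap: "0 < amin M xs" using amin_props(1)[OF pd] .
  have "vk xs k i s - vk xs k i t = (s - t) / acoef xs k i" by (simp add: vk_def diff_divide_distrib)
  then have "\<bar>vk xs k i s - vk xs k i t\<bar> = \<bar>s - t\<bar> / \<bar>acoef xs k i\<bar>" by simp
  also have "\<dots> \<le> \<bar>s - t\<bar> / amin M xs" using a ap by (intro divide_left_mono) auto
  finally show ?thesis .
qed

lemma abs_diff_le_max: "0 \<le> p \<Longrightarrow> p \<le> c \<Longrightarrow> 0 \<le> q \<Longrightarrow> q \<le> (c::real) \<Longrightarrow> \<bar>p - q\<bar> \<le> c"
  by linarith

lemma v_adj:
  assumes pd: "partition_data M xs" and i: "1 \<le> i" "Suc i \<le> M k"
    and s: "xs k (i - 1) \<le> s" "s \<le> xs k i" and t: "xs k i \<le> t" "t \<le> xs k (Suc i)"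
  shows "\<bar>vk xs k i s - vk xs k (Suc i) t\<bar> \<le> (t - s) / amin M xs"
proof -
  have ap: "0 < amin M xs" using amin_props(1)[OF pd] .
  have i': "1 \<le> Suc i" "i \<le> M k" using i by auto
  have a1: "amin M xs \<le> xs k i - xs k (i - 1)" using acoef_abs[OF pd i(1) i'(2)]
    amin_props(3)[OF pd i(1) i'(2)] by simp
  have a2: "amin M xs \<le> xs k (Suc i) - xs k i" using amin_props(3)[OF pd i'(1) i(2)] acoef_abs[OF pd i'(1) i(2)] by simp
  define P where "P = (xs k i - s) / (xs k i - xs k (i - 1))"
  define Q where "Q = (t - xs k i) / (xs k (Suc i) - xs k i)"
  have P0: "0 \<le> P" "P \<le> (t - s) / amin M xs"
  proof -
    show "0 \<le> P" unfolding P_def using s a1 ap by simp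
    have "P \<le> (t - s) / (xs k i - xs k (i - 1))" unfolding P_def using s t a1 ap by (intro divide_right_mono) auto
    also have "\<dots> \<le> (t - s) / amin M xs" using s t a1 ap by (intro divide_left_mono) auto
    finally show "P \<le> (t - s) / amin M xs" .
  qed
  have Q0: "0 \<le> Q" "Q \<le> (t - s) / amin M xs"
  proof -
    show "0 \<le> Q" unfolding Q_def using t a2 ap by simp
    have "Q \<le> (t - s) / (xs k (Suc i) - xs k i)" unfolding Q_def using s t a2 ap by (intro divide_right_mono) auto
    also have "\<dots> \<le> (t - s) / amin M xs" using s t a2 ap by (intro divide_left_mono) auto
    finally show "Q \<le> (t - s) / amin M xs" .
  qed
  have "\<bar>vk xs k i s - vk xs k (Suc i) t\<bar> = \<bar>P - Q\<bar>"
  proof (cases "odd i")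
    case True
    have "vk xs k i s = 1 - P" unfolding vk_def P_def using True a1 ap
      by (simp add: acoef_def bcoef_def divide_simps)
    moreover have "vk xs k (Suc i) t = 1 - Q" unfolding vk_def Q_def using True a2 ap
      by (simp add: acoef_def bcoef_def divide_simps) (simp add: algebra_simps)
    ultimately show ?thesis by simp
  next
    case False
    have "vk xs k i s = P" unfolding vk_def P_def using False a1 ap
      by (simp add: acoef_def bcoef_def divide_simps) (simp add: algebra_simps)
    moreover have "vk xs k (Suc i) t = Q" unfolding vk_def Q_def using False a2 ap
      by (simp add: acoef_def bcoef_def divide_simps)
    ultimately show ?thesis by simp
  qed
  then show ?thesis using abs_diff_le_max[OF P0 Q0] by simp
qed



lemma in_cube: "x \<in> unit_cube \<longleftrightarrow> (\<forall>k. 0 \<le> x $ k \<and> x $ k \<le> (1::real))"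
  unfolding unit_cube_def by (simp add: mem_box_cart)

lemma pair1_le:
  assumes pd: "partition_data M xs" and st: "0 \<le> s" "s \<le> t" "t \<le> 1" "t - s < amin M xs"
  shows "\<exists>i j. 1 \<le> i \<and> i \<le> M k \<and> 1 \<le> j \<and> j \<le> M k \<and> xs k (i - 1) \<le> s \<and> s \<le> xs k i
     \<and> xs k (j - 1) \<le> t \<and> t \<le> xs k j \<and> \<bar>vk xs k i s - vk xs k j t\<bar> \<le> \<bar>s - t\<bar> / amin M xs"
proof -
  obtain i where i: "1 \<le> i" "i \<le> M k" "xs k (i - 1) \<le> s" "s \<le> xs k i"
    using locate[OF pd, of s k] st by auto
  show ?thesis
  proof (cases "t \<le> xs k i")
    case True
    then show ?thesis using i st v_same[OF pd i(1,2), of s t] by (intro exI[of _ i] exI[of _ i]) auto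
  next
    case False
    have iM: "i < M k" using False i pd_1[OF pd, of k] st by (metis le_antisym not_le)
    have a2: "amin M xs \<le> xs k (Suc i) - xs k i"
      using amin_props(3)[OF pd, of "Suc i" k] acoef_abs[OF pd, of "Suc i" k] iM by simp
    have tS: "t \<le> xs k (Suc i)" using a2 st i by linarith
    have "\<bar>vk xs k i s - vk xs k (Suc i) t\<bar> \<le> (t - s) / amin M xs"
      using v_adj[OF pd i(1), of k s t] iM i tS False by simp
    then show ?thesis using i iM tS False st by (intro exI[of _ i] exI[of _ "Suc i"]) auto
  qed
qed

lemma pair1:
  assumes pd: "partition_data M xs" and st: "0 \<le> s" "s \<le> 1" "0 \<le> t" "t \<le> 1" "\<bar>s - t\<bar> < amin M xs"
  shows "\<exists>ij. 1 \<le> fst ij \<and> fst ij \<le> M k \<and> 1 \<le> snd ij \<and> snd ij \<le> M k \<and> xs k (fst ij - 1) \<le> s \<and> s \<le> xs k (fst ij)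
     \<and> xs k (snd ij - 1) \<le> t \<and> t \<le> xs k (snd ij) \<and> \<bar>vk xs k (fst ij) s - vk xs k (snd ij) t\<bar> \<le> \<bar>s - t\<bar> / amin M xs"
proof (cases "s \<le> t")
  case True
  then obtain i j where "1 \<le> i \<and> i \<le> M k \<and> 1 \<le> j \<and> j \<le> M k \<and> xs k (i - 1) \<le> s \<and> s \<le> xs k i
     \<and> xs k (j - 1) \<le> t \<and> t \<le> xs k j \<and> \<bar>vk xs k i s - vk xs k j t\<bar> \<le> \<bar>s - t\<bar> / amin M xs"
    using pair1_le[OF pd, of s t k] st by auto
  then show ?thesis by (intro exI[of _ "(i,j)"]) simp
next
  case False
  then obtain i j where "1 \<le> i \<and> i \<le> M k \<and> 1 \<le> j \<and> j \<le> M k \<and> xs k (i - 1) \<le> t \<and> t \<le> xs k i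
     \<and> xs k (j - 1) \<le> s \<and> s \<le> xs k j \<and> \<bar>vk xs k i t - vk xs k j s\<bar> \<le> \<bar>t - s\<bar> / amin M xs"
    using pair1_le[OF pd, of t s k] st by auto
  then show ?thesis by (intro exI[of _ "(j,i)"]) (simp add: abs_minus_commute)
qed

lemma uinv_cube:
  assumes pd: "partition_data M xs" and i: "\<forall>k. 1 \<le> i k \<and> i k \<le> M k" and y: "y \<in> cell xs i"
  shows "uinv xs i y \<in> unit_cube"
  unfolding in_cube uinv_nth using v_range[OF pd] i y unfolding cell_def by blast

lemma pair:
  fixes M :: "'q::finite \<Rightarrow> nat"
  assumes pd: "partition_data M xs" and xy: "x \<in> unit_cube" "y \<in> unit_cube" "dist x y < amin M xs"
  shows "\<exists>i j. (\<forall>k. 1 \<le> i k \<and> i k \<le> M k) \<and> (\<forall>k. 1 \<le> j k \<and> j k \<le> M k) \<and> x \<in> cell xs i \<and> y \<in> cell xs j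
     \<and> dist (uinv xs i x) (uinv xs j y) \<le> dist x y / amin M xs"
proof -
  have "\<forall>k. \<exists>ij. 1 \<le> fst ij \<and> fst ij \<le> M k \<and> 1 \<le> snd ij \<and> snd ij \<le> M k \<and> xs k (fst ij - 1) \<le> x$k \<and> x$k \<le> xs k (fst ij)
     \<and> xs k (snd ij - 1) \<le> y$k \<and> y$k \<le> xs k (snd ij) \<and> \<bar>vk xs k (fst ij) (x$k) - vk xs k (snd ij) (y$k)\<bar> \<le> \<bar>x$k - y$k\<bar> / amin M xs"
    apply (rule allI)
    subgoal for k
    proof -
      have "\<bar>x$k - y$k\<bar> \<le> dist x y" using component_le_norm_cart[of "x - y" k] by (simp add: dist_norm)
      then show ?thesis using pair1[OF pd, of "x$k" "y$k" k] xy unfolding in_cube by auto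
    qed
    done
  then obtain ij where ij: "\<forall>k. 1 \<le> fst (ij k) \<and> fst (ij k) \<le> M k \<and> 1 \<le> snd (ij k) \<and> snd (ij k) \<le> M k \<and> xs k (fst (ij k) - 1) \<le> x$k \<and> x$k \<le> xs k (fst (ij k))
     \<and> xs k (snd (ij k) - 1) \<le> y$k \<and> y$k \<le> xs k (snd (ij k)) \<and> \<bar>vk xs k (fst (ij k)) (x$k) - vk xs k (snd (ij k)) (y$k)\<bar> \<le> \<bar>x$k - y$k\<bar> / amin M xs"
    by (rule choice[THEN exE]) blast
  define i where "i = (\<lambda>k. fst (ij k))"
  define j where "j = (\<lambda>k. snd (ij k))"
  have ap: "0 < amin M xs" using amin_props(1)[OF pd] .
  have "norm (uinv xs i x - uinv xs j y) \<le> norm ((1 / amin M xs) *\<^sub>R (x - y))"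
  proof (rule norm_le_componentwise_cart)
    fix k
    show "norm ((uinv xs i x - uinv xs j y) $ k) \<le> norm (((1 / amin M xs) *\<^sub>R (x - y)) $ k)"
      using ij ap unfolding i_def j_def by (simp add: uinv_nth)
  qed
  also have "\<dots> = dist x y / amin M xs" using ap by (simp add: dist_norm)
  finally have "dist (uinv xs i x) (uinv xs j y) \<le> dist x y / amin M xs" by (simp add: dist_norm)
  then show ?thesis apply (rule_tac exI[of _ i], rule_tac exI[of _ j]) using ij unfolding i_def j_def cell_def by auto
qed



lemma holder_nonneg:
  assumes "holder_on \<sigma> S h"
  obtains K where "0 \<le> K" "\<And>x y. x \<in> S \<Longrightarrow> y \<in> S \<Longrightarrow> \<bar>h x - h y\<bar> \<le> K * dist x y powr \<sigma>"
proof -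
  obtain K where K: "\<forall>x\<in>S. \<forall>y\<in>S. \<bar>h x - h y\<bar> \<le> K * dist x y powr \<sigma>" using assms unfolding holder_on_def by blast
  have "\<bar>h x - h y\<bar> \<le> max K 0 * dist x y powr \<sigma>" if "x \<in> S" "y \<in> S" for x y
  proof -
    have "K * dist x y powr \<sigma> \<le> max K 0 * dist x y powr \<sigma>" by (intro mult_right_mono) auto
    then show ?thesis using K that by force
  qed
  then show ?thesis using that[of "max K 0"] by auto
qed

lemma holder_bounded:
  assumes "holder_on \<sigma> S h" "z \<in> S" "bounded S" "0 \<le> \<sigma>"
  obtains C where "\<And>x. x \<in> S \<Longrightarrow> \<bar>h x\<bar> \<le> C"
proof -
  obtain K where K: "0 \<le> K" "\<And>x y. x \<in> S \<Longrightarrow> y \<in> S \<Longrightarrow> \<bar>h x - h y\<bar> \<le> K * dist x y powr \<sigma>"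
    using holder_nonneg[OF assms(1)] by blast
  obtain B where B: "\<And>x. x \<in> S \<Longrightarrow> dist z x \<le> B" using bounded_any_center[THEN iffD1, OF assms(3), of z] by blast
  have "\<bar>h x\<bar> \<le> \<bar>h z\<bar> + K * B powr \<sigma>" if x: "x \<in> S" for x
  proof -
    have "\<bar>h x - h z\<bar> \<le> K * dist x z powr \<sigma>" using K(2) x assms(2) by blast
    also have "\<dots> \<le> K * B powr \<sigma>" using B[OF x] K(1) assms(4) by (intro mult_left_mono powr_mono2) (auto simp: dist_commute)
    finally show ?thesis by linarith
  qed
  then show ?thesis using that by blast
qed

lemma cube_bounded: "bounded (unit_cube :: (real^'q::finite) set)"
  unfolding unit_cube_def by (rule bounded_cbox)

lemma zero_cube: "0 \<in> (unit_cube :: (real^'q::finite) set)"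
  unfolding in_cube by simp

lemma holder_g:
  fixes M :: "'q::finite \<Rightarrow> nat" and xs :: "'q \<Rightarrow> nat \<Rightarrow> real"
    and f \<alpha> s g :: "real^'q \<Rightarrow> real" and \<sigma> :: real
  assumes pd: "partition_data M xs"
    and sigma: "0 < \<sigma>" "\<sigma> \<le> 1"
    and hf: "holder_on \<sigma> unit_cube f"
    and ha: "holder_on \<sigma> unit_cube \<alpha>"
    and hs: "holder_on \<sigma> unit_cube s"
    and rho: "sup_norm_on unit_cube \<alpha> / amin M xs powr \<sigma> < 1"
    and frac: "is_alpha_fractal M xs f \<alpha> s g"
  shows "holder_on \<sigma> unit_cube g"
proof -
  let ?Q = "unit_cube :: (real^'q) set"
  define a where "a = amin M xs"
  have a0: "0 < a" and a1: "a \<le> 1" using amin_props[OF pd] unfolding a_def by auto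
  have aspos: "0 < a powr \<sigma>" using a0 by simp
  obtain Kf where Kf: "0 \<le> Kf" "\<And>x y. x \<in> ?Q \<Longrightarrow> y \<in> ?Q \<Longrightarrow> \<bar>f x - f y\<bar> \<le> Kf * dist x y powr \<sigma>"
    using holder_nonneg[OF hf] by blast
  obtain Ka where Ka: "0 \<le> Ka" "\<And>x y. x \<in> ?Q \<Longrightarrow> y \<in> ?Q \<Longrightarrow> \<bar>\<alpha> x - \<alpha> y\<bar> \<le> Ka * dist x y powr \<sigma>"
    using holder_nonneg[OF ha] by blast
  obtain Ks where Ks: "0 \<le> Ks" "\<And>x y. x \<in> ?Q \<Longrightarrow> y \<in> ?Q \<Longrightarrow> \<bar>s x - s y\<bar> \<le> Ks * dist x y powr \<sigma>"
    using holder_nonneg[OF hs] by blast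
  obtain Ca where Ca: "\<And>x. x \<in> ?Q \<Longrightarrow> \<bar>\<alpha> x\<bar> \<le> Ca"
    using holder_bounded[OF ha zero_cube cube_bounded] sigma by auto
  define A where "A = sup_norm_on ?Q \<alpha>"
  have Aal: "\<bar>\<alpha> x\<bar> \<le> A" if "x \<in> ?Q" for x
    unfolding A_def sup_norm_on_def using that Ca by (intro cSUP_upper bdd_aboveI2[of _ _ Ca]) auto
  have A0: "0 \<le> A" using Aal[OF zero_cube] by linarith
  obtain sb where sb: "\<And>x. x \<in> ?Q \<Longrightarrow> \<bar>s x\<bar> \<le> sb"
    using holder_bounded[OF hs zero_cube cube_bounded] sigma by auto
  have gcont: "continuous_on ?Q g" using frac unfolding is_alpha_fractal_def by blast
  have "bounded (g ` ?Q)" unfolding unit_cube_def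
    by (intro compact_imp_bounded compact_continuous_image) (use gcont in \<open>auto simp: unit_cube_def\<close>)
  then obtain gb where gb: "\<And>x. x \<in> ?Q \<Longrightarrow> \<bar>g x\<bar> \<le> gb" unfolding bounded_iff by auto
  have gb0: "0 \<le> gb" using gb[OF zero_cube] by linarith
  have feq: "g y = f y + \<alpha> y * (g (uinv xs i y) - s (uinv xs i y))"
    if "\<forall>k. 1 \<le> i k \<and> i k \<le> M k" "y \<in> cell xs i" for i y
    using frac that unfolding is_alpha_fractal_def by blast
  define \<rho> where "\<rho> = A / a powr \<sigma>"
  have rho1: "\<rho> < 1" using rho unfolding \<rho>_def A_def a_def .
  have rho0: "0 \<le> \<rho>" unfolding \<rho>_def using A0 aspos by simp
  define Gb where "Gb = gb + sb"
  define K1 where "K1 = 2 * gb / a powr \<sigma>"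
  define K2 where "K2 = Kf + Ka * Gb + \<rho> * Ks"
  define C where "C = max K1 (K2 / (1 - \<rho>))"
  have main: "\<bar>g x - g y\<bar> \<le> C * max (dist x y) \<delta> powr \<sigma>"
    if \<delta>: "0 < \<delta>" and xy: "x \<in> ?Q" "y \<in> ?Q" for \<delta> x y
  proof -
    define r where "r = (\<lambda>(x,y). \<bar>g x - g y\<bar> / max (dist x y) \<delta> powr \<sigma>)"
    define P where "P = r ` (?Q \<times> ?Q)"
    have mpos: "0 < max (dist u v) \<delta> powr \<sigma>" for u v using \<delta> by simp
    have rle: "r (u, v) \<le> 2 * gb / \<delta> powr \<sigma>" if "u \<in> ?Q" "v \<in> ?Q" for u v
    proof -
      have "\<bar>g u - g v\<bar> \<le> 2 * gb" using gb[OF that(1)] gb[OF that(2)] by linarith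
      moreover have "\<delta> powr \<sigma> \<le> max (dist u v) \<delta> powr \<sigma>" using \<delta> sigma by (intro powr_mono2) auto
      ultimately show ?thesis unfolding r_def using gb0 \<delta>
        by (simp add: frac_le)
    qed
    have bdd: "bdd_above P" unfolding P_def using rle by (intro bdd_aboveI2[of _ _ "2 * gb / \<delta> powr \<sigma>"]) auto
    define \<Phi> where "\<Phi> = Sup P"
    have rPhi: "r (u, v) \<le> \<Phi>" if "u \<in> ?Q" "v \<in> ?Q" for u v
      unfolding \<Phi>_def using bdd that unfolding P_def by (intro cSup_upper) auto
    have Phi0: "0 \<le> \<Phi>" using rPhi[OF zero_cube zero_cube] unfolding r_def by simp
    have gPhi: "\<bar>g u - g v\<bar> \<le> \<Phi> * max (dist u v) \<delta> powr \<sigma>" if "u \<in> ?Q" "v \<in> ?Q" for u v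
      using rPhi[OF that] mpos[of u v] unfolding r_def by (simp add: divide_le_eq)
    have pbound: "r (u, v) \<le> max K1 (K2 + \<rho> * \<Phi>)" if uv: "u \<in> ?Q" "v \<in> ?Q" for u v
    proof -
      define m where "m = max (dist u v) \<delta>"
      have m0: "0 < m" "dist u v \<le> m" "\<delta> \<le> m" unfolding m_def using \<delta> by auto
      define w where "w = m powr \<sigma>"
      have w0: "0 < w" unfolding w_def using m0 by simp
      have rw: "r (u, v) = \<bar>g u - g v\<bar> / w" unfolding r_def w_def m_def by simp
      have dw: "dist u v powr \<sigma> \<le> w" unfolding w_def using m0 sigma by (intro powr_mono2) auto
      show ?thesis
      proof (cases "a \<le> dist u v")
        case True
        have "a powr \<sigma> \<le> w" unfolding w_def using True m0 a0 sigma by (intro powr_mono2) auto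
        have "\<bar>g u - g v\<bar> \<le> 2 * gb" using gb[OF uv(1)] gb[OF uv(2)] by linarith
        also have "\<dots> = K1 * a powr \<sigma>" unfolding K1_def using aspos by simp
        also have "\<dots> \<le> K1 * w" using \<open>a powr \<sigma> \<le> w\<close> gb0 aspos unfolding K1_def by (intro mult_left_mono) auto
        finally have "r (u, v) \<le> K1" unfolding rw using w0 by (simp add: divide_le_eq)
        then show ?thesis by simp
      next
        case False
        then have "dist u v < a" by simp
        then obtain i j where ij: "\<forall>k. 1 \<le> i k \<and> i k \<le> M k" "\<forall>k. 1 \<le> j k \<and> j k \<le> M k" "u \<in> cell xs i" "v \<in> cell xs j"
          "dist (uinv xs i u) (uinv xs j v) \<le> dist u v / a"
          using pair[OF pd uv] unfolding a_def by blast
        define uu where "uu = uinv xs i u"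
        define vv where "vv = uinv xs j v"
        have uuQ: "uu \<in> ?Q" unfolding uu_def using uinv_cube[OF pd ij(1,3)] .
        have vvQ: "vv \<in> ?Q" unfolding vv_def using uinv_cube[OF pd ij(2,4)] .
        have du: "dist uu vv \<le> m / a" using ij(5) m0 a0 unfolding uu_def vv_def by (simp add: divide_right_mono order_trans)
        have dm: "\<delta> \<le> m / a" proof -
          have "\<delta> * a \<le> \<delta> * 1" using \<delta> a1 by (intro mult_left_mono) auto
          then show ?thesis using m0 a0 by (simp add: le_divide_eq)
        qed
        have wa: "(m / a) powr \<sigma> = w / a powr \<sigma>" unfolding w_def using m0 a0 by (simp add: powr_divide)
        have e1: "\<bar>g uu - g vv\<bar> \<le> \<Phi> * (w / a powr \<sigma>)"
        proof -
          have "\<bar>g uu - g vv\<bar> \<le> \<Phi> * max (dist uu vv) \<delta> powr \<sigma>" using gPhi[OF uuQ vvQ] .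
          also have "\<dots> \<le> \<Phi> * (m / a) powr \<sigma>" using du dm Phi0 sigma \<delta>
            by (intro mult_left_mono powr_mono2) auto
          finally show ?thesis using wa by simp
        qed
        have e2: "\<bar>s uu - s vv\<bar> \<le> Ks * (w / a powr \<sigma>)"
        proof -
          have "\<bar>s uu - s vv\<bar> \<le> Ks * dist uu vv powr \<sigma>" using Ks(2)[OF uuQ vvQ] .
          also have "\<dots> \<le> Ks * (m / a) powr \<sigma>" using du Ks(1) sigma
            by (intro mult_left_mono powr_mono2) auto
          finally show ?thesis using wa by simp
        qed
        have e3: "\<bar>f u - f v\<bar> \<le> Kf * w" using Kf(2)[OF uv] dw Kf(1) by (meson mult_left_mono order_trans)
        have e4: "\<bar>\<alpha> u - \<alpha> v\<bar> \<le> Ka * w" using Ka(2)[OF uv] dw Ka(1) by (meson mult_left_mono order_trans)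
        have e5: "\<bar>g uu - s uu\<bar> \<le> Gb" using gb[OF uuQ] sb[OF uuQ] unfolding Gb_def by linarith
        have e6: "\<bar>\<alpha> v\<bar> \<le> A" using Aal[OF uv(2)] .
        have gu: "g u = f u + \<alpha> u * (g uu - s uu)" unfolding uu_def using feq[OF ij(1,3)] .
        have gv: "g v = f v + \<alpha> v * (g vv - s vv)" unfolding vv_def using feq[OF ij(2,4)] .
        have "g u - g v = (f u - f v) + (\<alpha> u - \<alpha> v) * (g uu - s uu) + \<alpha> v * ((g uu - g vv) - (s uu - s vv))"
          unfolding gu gv by (simp add: algebra_simps)
        then have "\<bar>g u - g v\<bar> \<le> \<bar>f u - f v\<bar> + \<bar>\<alpha> u - \<alpha> v\<bar> * \<bar>g uu - s uu\<bar> + \<bar>\<alpha> v\<bar> * (\<bar>g uu - g vv\<bar> + \<bar>s uu - s vv\<bar>)"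
        proof -
          assume eq: "g u - g v = (f u - f v) + (\<alpha> u - \<alpha> v) * (g uu - s uu) + \<alpha> v * ((g uu - g vv) - (s uu - s vv))"
          have "\<bar>(g uu - g vv) - (s uu - s vv)\<bar> \<le> \<bar>g uu - g vv\<bar> + \<bar>s uu - s vv\<bar>" by (rule abs_triangle_ineq4)
          then have z: "\<bar>\<alpha> v * ((g uu - g vv) - (s uu - s vv))\<bar> \<le> \<bar>\<alpha> v\<bar> * (\<bar>g uu - g vv\<bar> + \<bar>s uu - s vv\<bar>)"
            unfolding abs_mult by (rule mult_left_mono) simp
          have "\<bar>g u - g v\<bar> \<le> \<bar>f u - f v\<bar> + \<bar>(\<alpha> u - \<alpha> v) * (g uu - s uu)\<bar> + \<bar>\<alpha> v * ((g uu - g vv) - (s uu - s vv))\<bar>"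
            unfolding eq by (rule order_trans[OF abs_triangle_ineq add_right_mono[OF abs_triangle_ineq]])
          then show ?thesis using z unfolding abs_mult by linarith
        qed
        also have "\<dots> \<le> Kf * w + (Ka * w) * Gb + A * (\<Phi> * (w / a powr \<sigma>) + Ks * (w / a powr \<sigma>))"
        proof -
          have "\<bar>\<alpha> u - \<alpha> v\<bar> * \<bar>g uu - s uu\<bar> \<le> (Ka * w) * Gb"
            using e4 e5 Ka(1) w0 by (intro mult_mono) auto
          moreover have "\<bar>\<alpha> v\<bar> * (\<bar>g uu - g vv\<bar> + \<bar>s uu - s vv\<bar>) \<le> A * (\<Phi> * (w / a powr \<sigma>) + Ks * (w / a powr \<sigma>))"
            using e6 e1 e2 A0 by (intro mult_mono add_mono) auto
          ultimately show ?thesis using e3 by linarith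
        qed
        also have "\<dots> = (K2 + \<rho> * \<Phi>) * w" unfolding K2_def \<rho>_def using aspos by (simp add: field_simps)
        finally have "r (u, v) \<le> K2 + \<rho> * \<Phi>" unfolding rw using w0 by (simp add: divide_le_eq)
        then show ?thesis by simp
      qed
    qed
    have ne: "?Q \<times> ?Q \<noteq> {}" using zero_cube by blast
    have "Sup P \<le> max K1 (K2 + \<rho> * \<Phi>)" using pbound ne unfolding P_def
      by (intro cSup_least) auto
    then have "\<Phi> \<le> max K1 (K2 + \<rho> * \<Phi>)" unfolding \<Phi>_def .
    then have PhiC: "\<Phi> \<le> C"
    proof (cases "\<Phi> \<le> K1")
      case True then show ?thesis unfolding C_def by simp
    next
      case False
      then have "\<Phi> \<le> K2 + \<rho> * \<Phi>" using \<open>\<Phi> \<le> max K1 (K2 + \<rho> * \<Phi>)\<close> by simp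
      then have "\<Phi> * (1 - \<rho>) \<le> K2" by (simp add: algebra_simps)
      then have "\<Phi> \<le> K2 / (1 - \<rho>)" using rho1 by (simp add: le_divide_eq)
      then show ?thesis unfolding C_def by simp
    qed
    have "\<bar>g x - g y\<bar> \<le> \<Phi> * max (dist x y) \<delta> powr \<sigma>" using gPhi[OF xy] .
    also have "\<dots> \<le> C * max (dist x y) \<delta> powr \<sigma>" using PhiC mpos[of x y] by (intro mult_right_mono) auto
    finally show ?thesis .
  qed
  have "\<bar>g x - g y\<bar> \<le> C * dist x y powr \<sigma>" if "x \<in> ?Q" "y \<in> ?Q" for x y
  proof (cases "x = y")
    case True then show ?thesis by simp
  next
    case False
    then show ?thesis using main[of "dist x y" x y] that by simp
  qed
  then show ?thesis unfolding holder_on_def by blast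
qed



lemma cube_dist:
  fixes x y :: "real^'q::finite"
  assumes "\<And>k. \<bar>x $ k - y $ k\<bar> \<le> h"
  shows "dist x y \<le> real CARD('q) * h"
proof -
  have "dist x y = norm (x - y)" by (simp add: dist_norm)
  also have "\<dots> \<le> (\<Sum>k\<in>UNIV. \<bar>(x - y) $ k\<bar>)" by (rule norm_le_l1_cart)
  also have "\<dots> \<le> (\<Sum>k\<in>(UNIV::'q set). h)" using assms by (intro sum_mono) simp
  finally show ?thesis by simp
qed

lemma absdiff_h: "c*h \<le> a \<Longrightarrow> a \<le> (c+1)*h \<Longrightarrow> c*h \<le> b \<Longrightarrow> b \<le> (c+1)*h \<Longrightarrow> \<bar>a - b\<bar> \<le> (h::real)"
  unfolding distrib_right abs_le_iff by (intro conjI; linarith)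

lemma grid_cover:
  fixes g :: "real^'q::finite \<Rightarrow> real"
  assumes K: "0 \<le> K" "\<And>x y. x \<in> unit_cube \<Longrightarrow> y \<in> unit_cube \<Longrightarrow> \<bar>g x - g y\<bar> \<le> K * dist x y powr \<sigma>"
    and sig: "0 < \<sigma>" and h: "0 < h" "h \<le> 1"
  shows "\<exists>F. finite F \<and> graph_of unit_cube g \<subseteq> \<Union>F \<and> (\<forall>U\<in>F. bounded U \<and> diameter U \<le> (real CARD('q) + 1) * h)
     \<and> real (card F) \<le> real (nat \<lceil>1 / h\<rceil>) ^ CARD('q) * (2 * K * (real CARD('q) * h) powr \<sigma> / h + 2)"
proof -
  define q where "q = CARD('q)"
  define n where "n = nat \<lceil>1 / h\<rceil>"
  have ceil: "1 / h \<le> real_of_int \<lceil>1 / h\<rceil>" by (rule le_of_int_ceiling)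
  have h1: "1 \<le> 1 / h" using h by simp
  have c1: "1 \<le> \<lceil>1 / h\<rceil>" using ceil h1 by linarith
  have rn: "real n = real_of_int \<lceil>1 / h\<rceil>" unfolding n_def using c1 by simp
  have n1: "1 \<le> n" unfolding n_def using c1 by linarith
  have "1 \<le> real_of_int \<lceil>1 / h\<rceil> * h" using mult_right_mono[OF ceil, of h] h by simp
  then have nh: "1 \<le> real n * h" using rn by simp
  define Z where "Z = PiE (UNIV :: 'q set) (\<lambda>_. {..<n})"
  define lo where "lo = (\<lambda>z::'q \<Rightarrow> nat. (\<chi> k. real (z k) * h) :: real^'q)"
  define hi where "hi = (\<lambda>z::'q \<Rightarrow> nat. (\<chi> k. (real (z k) + 1) * h) :: real^'q)"
  define Qz where "Qz = (\<lambda>z. cbox (lo z) (hi z))"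
  define J where "J = (\<lambda>z. (\<lambda>x. \<lfloor>g x / h\<rfloor>) ` (unit_cube \<inter> Qz z))"
  define B where "B = (\<lambda>z (j::int). Qz z \<times> {real_of_int j * h .. (real_of_int j + 1) * h})"
  define F where "F = (\<Union>z\<in>Z. B z ` J z)"
  define R where "R = K * (real q * h) powr \<sigma>"
  have R0: "0 \<le> R" unfolding R_def using K(1) by simp
  have inQ: "x \<in> Qz z \<longleftrightarrow> (\<forall>k. real (z k) * h \<le> x $ k \<and> x $ k \<le> (real (z k) + 1) * h)" for x z
    unfolding Qz_def lo_def hi_def by (simp add: mem_box_cart)
  have Jz: "finite (J z) \<and> real (card (J z)) \<le> 2 * R / h + 2" for z
  proof (cases "unit_cube \<inter> Qz z = {}")
    case True
    then show ?thesis unfolding J_def using R0 h by simp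
  next
    case False
    then obtain x0 where x0: "x0 \<in> unit_cube" "x0 \<in> Qz z" by blast
    define a where "a = \<lfloor>(g x0 - R) / h\<rfloor>"
    define b where "b = \<lfloor>(g x0 + R) / h\<rfloor>"
    have sub: "J z \<subseteq> {a..b}"
    proof
      fix j assume "j \<in> J z"
      then obtain x where x: "x \<in> unit_cube" "x \<in> Qz z" and j: "j = \<lfloor>g x / h\<rfloor>" unfolding J_def by blast
      have "\<bar>x $ k - x0 $ k\<bar> \<le> h" for k using x(2) x0(2) unfolding inQ
        by (intro absdiff_h[of "real (z k)" h]) auto
      then have "dist x x0 \<le> real q * h" unfolding q_def by (rule cube_dist)
      then have "dist x x0 powr \<sigma> \<le> (real q * h) powr \<sigma>" using sig by (intro powr_mono2) auto
      then have "K * dist x x0 powr \<sigma> \<le> R" unfolding R_def using K(1) by (rule mult_left_mono)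
      then have "\<bar>g x - g x0\<bar> \<le> R" using K(2)[OF x(1) x0(1)] by linarith
      then have "(g x0 - R) / h \<le> g x / h" "g x / h \<le> (g x0 + R) / h" using h by (auto intro!: divide_right_mono)
      then show "j \<in> {a..b}" unfolding j a_def b_def by (auto intro: floor_mono)
    qed
    have ab: "real_of_int b - real_of_int a \<le> 2 * R / h + 1"
    proof -
      have "real_of_int b \<le> (g x0 + R) / h" unfolding b_def by simp
      moreover have "(g x0 - R) / h < real_of_int a + 1" unfolding a_def by linarith
      moreover have "(g x0 + R) / h - (g x0 - R) / h = 2 * R / h" by (simp add: diff_divide_distrib[symmetric])
      ultimately show ?thesis by linarith
    qed
    have ab2: "a \<le> b" unfolding a_def b_def using R0 h by (intro floor_mono divide_right_mono) auto
    have "card (J z) \<le> card {a..b}" using sub by (intro card_mono) auto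
    then have "real (card (J z)) \<le> real (nat (b - a + 1))" by simp
    also have "\<dots> = real_of_int b - real_of_int a + 1" using ab2 by simp
    finally show ?thesis using ab finite_subset[OF sub] by simp
  qed
  have finZ: "finite Z" unfolding Z_def by (intro finite_PiE) auto
  have cardZ: "card Z = n ^ q" unfolding Z_def q_def by (simp add: card_PiE)
  have finF: "finite F" unfolding F_def using finZ Jz by auto
  have "card F \<le> (\<Sum>z\<in>Z. card (B z ` J z))" unfolding F_def using finZ by (rule card_UN_le)
  also have "\<dots> \<le> (\<Sum>z\<in>Z. card (J z))" by (intro sum_mono card_image_le) (use Jz in auto)
  finally have "real (card F) \<le> (\<Sum>z\<in>Z. real (card (J z)))" by (metis of_nat_le_iff of_nat_sum)
  also have "\<dots> \<le> (\<Sum>z\<in>Z. 2 * R / h + 2)" using Jz by (intro sum_mono) auto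
  also have "\<dots> = real n ^ q * (2 * R / h + 2)" using cardZ by simp
  finally have cardF: "real (card F) \<le> real n ^ q * (2 * R / h + 2)" .
  have cover: "graph_of unit_cube g \<subseteq> \<Union>F"
  proof
    fix p assume "p \<in> graph_of unit_cube g"
    then obtain x where x: "x \<in> unit_cube" and p: "p = (x, g x)" unfolding graph_of_def by blast
    have x01: "0 \<le> x $ k" "x $ k \<le> 1" for k using x unfolding in_cube by auto
    define z where "z = (\<lambda>k. min (nat \<lfloor>x $ k / h\<rfloor>) (n - 1))"
    have zZ: "z \<in> Z" unfolding Z_def z_def using n1 by auto
    have xQ: "x \<in> Qz z" unfolding inQ
    proof
      fix k
      have fl0: "0 \<le> \<lfloor>x $ k / h\<rfloor>" using x01[of k] h by simp
      have f1: "real_of_int \<lfloor>x $ k / h\<rfloor> * h \<le> x $ k" using mult_right_mono[OF of_int_floor_le[of "x $ k / h"], of h] h by simp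
      have f2: "x $ k < (real_of_int \<lfloor>x $ k / h\<rfloor> + 1) * h"
      proof -
        have "x $ k / h < real_of_int \<lfloor>x $ k / h\<rfloor> + 1" by linarith
        from mult_strict_right_mono[OF this h(1)] show ?thesis using h by simp
      qed
      have "z k \<le> nat \<lfloor>x $ k / h\<rfloor>" unfolding z_def by simp
      then have "real (z k) \<le> real (nat \<lfloor>x $ k / h\<rfloor>)" by simp
      also have "\<dots> = real_of_int \<lfloor>x $ k / h\<rfloor>" using fl0 by simp
      finally have "real (z k) \<le> real_of_int \<lfloor>x $ k / h\<rfloor>" .
      then have lo: "real (z k) * h \<le> x $ k" using f1 h by (meson mult_right_mono less_imp_le order_trans)
      have up: "x $ k \<le> (real (z k) + 1) * h"
      proof (cases "nat \<lfloor>x $ k / h\<rfloor> \<le> n - 1")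
        case True
        then have "real (z k) = real_of_int \<lfloor>x $ k / h\<rfloor>" unfolding z_def using fl0 by simp
        then show ?thesis using f2 by simp
      next
        case False
        then have "z k = n - 1" unfolding z_def by simp
        then have "real (z k) + 1 = real n" using n1 by simp
        then show ?thesis using nh x01[of k] by simp
      qed
      show "real (z k) * h \<le> x $ k \<and> x $ k \<le> (real (z k) + 1) * h" using lo up by simp
    qed
    define j where "j = \<lfloor>g x / h\<rfloor>"
    have jJ: "j \<in> J z" unfolding J_def j_def using x xQ by blast
    have gj: "real_of_int j * h \<le> g x" "g x \<le> (real_of_int j + 1) * h"
    proof -
      show "real_of_int j * h \<le> g x" unfolding j_def using mult_right_mono[OF of_int_floor_le[of "g x / h"], of h] h by simp
      have "g x / h < real_of_int j + 1" unfolding j_def by linarith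
      from mult_strict_right_mono[OF this h(1)] show "g x \<le> (real_of_int j + 1) * h" using h by simp
    qed
    have "p \<in> B z j" unfolding B_def p using xQ gj by simp
    then show "p \<in> \<Union>F" unfolding F_def using zZ jJ by blast
  qed
  have boxes: "bounded U \<and> diameter U \<le> (real q + 1) * h" if "U \<in> F" for U
  proof -
    obtain z j where U: "U = B z j" using \<open>U \<in> F\<close> unfolding F_def by blast
    have bd: "bounded U" unfolding U B_def Qz_def by (intro bounded_Times bounded_cbox) simp
    have "diameter U \<le> (real q + 1) * h"
    proof (rule diameter_le)
      show "U \<noteq> {} \<or> 0 \<le> (real q + 1) * h" using h by simp
      fix p1 p2 assume p: "p1 \<in> U" "p2 \<in> U"
      have d1: "\<bar>fst p1 $ k - fst p2 $ k\<bar> \<le> h" for k using p unfolding U B_def inQ mem_Times_iff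
        by (intro absdiff_h[of "real (z k)" h]) auto
      have "norm (fst p1 - fst p2) \<le> real q * h" using cube_dist[OF d1] unfolding q_def by (simp add: dist_norm)
      moreover have "\<bar>snd p1 - snd p2\<bar> \<le> h" using p unfolding U B_def mem_Times_iff by (auto simp: algebra_simps)
      moreover have "norm (p1 - p2) \<le> norm (fst p1 - fst p2) + norm (snd p1 - snd p2)"
      proof -
        have "p1 - p2 = (fst p1 - fst p2, snd p1 - snd p2)" by (simp add: prod_eq_iff)
        then show ?thesis using norm_Pair_le[of "fst p1 - fst p2" "snd p1 - snd p2"] by simp
      qed
      ultimately show "norm (p1 - p2) \<le> (real q + 1) * h" by (simp add: algebra_simps)
    qed
    then show ?thesis using bd by simp
  qed
  show ?thesis
    apply (rule exI[of _ F])
    using finF cover boxes cardF unfolding R_def n_def q_def by (auto simp: mult.assoc)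
qed



lemma cover_number_facts:
  fixes g :: "real^'q::finite \<Rightarrow> real"
  assumes K: "0 \<le> K" "\<And>x y. x \<in> unit_cube \<Longrightarrow> y \<in> unit_cube \<Longrightarrow> \<bar>g x - g y\<bar> \<le> K * dist x y powr \<sigma>"
    and sig: "0 < \<sigma>" "\<sigma> \<le> 1" and d: "0 < \<delta>" "\<delta> \<le> 1"
  shows "\<exists>F. finite F \<and> card F = cover_number \<delta> (graph_of unit_cube g) \<and> graph_of unit_cube g \<subseteq> \<Union>F
            \<and> (\<forall>U\<in>F. bounded U \<and> diameter U \<le> \<delta>)"
    and "real (cover_number \<delta> (graph_of unit_cube g)) \<le>
           (2 ^ CARD('q) * (2 * K * real CARD('q) powr \<sigma> + 2) * (real CARD('q) + 1) powr (real CARD('q) + 1 - \<sigma>))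
            * \<delta> powr (- (real CARD('q) + 1 - \<sigma>))"
proof -
  define q where "q = CARD('q)"
  define E where "E = graph_of unit_cube g"
  define h where "h = \<delta> / (real q + 1)"
  have h: "0 < h" "h \<le> 1" unfolding h_def using d by (auto simp: divide_le_eq)
  have qh: "(real q + 1) * h = \<delta>" unfolding h_def by simp
  obtain F where F: "finite F" "E \<subseteq> \<Union>F" "\<forall>U\<in>F. bounded U \<and> diameter U \<le> \<delta>"
     "real (card F) \<le> real (nat \<lceil>1 / h\<rceil>) ^ q * (2 * K * (real q * h) powr \<sigma> / h + 2)"
    using grid_cover[OF K sig(1) h] unfolding q_def[symmetric] qh E_def by blast
  define P where "P = (\<lambda>n. \<exists>F. finite F \<and> card F = n \<and> E \<subseteq> \<Union>F \<and> (\<forall>U\<in>F. bounded U \<and> diameter U \<le> \<delta>))"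
  have PF: "P (card F)" unfolding P_def using F by blast
  have cn: "cover_number \<delta> E = (LEAST n. P n)" unfolding cover_number_def P_def ..
  show "\<exists>F. finite F \<and> card F = cover_number \<delta> (graph_of unit_cube g) \<and> graph_of unit_cube g \<subseteq> \<Union>F
            \<and> (\<forall>U\<in>F. bounded U \<and> diameter U \<le> \<delta>)"
    using LeastI[of P, OF PF] unfolding cn[unfolded E_def] P_def E_def by blast
  have le: "cover_number \<delta> E \<le> card F" unfolding cn by (rule Least_le[of P, OF PF])
  define n where "n = nat \<lceil>1 / h\<rceil>"
  have "real_of_int \<lceil>1 / h\<rceil> < 1 / h + 1" using ceiling_correct[of "1/h"] by linarith
  moreover have "0 \<le> \<lceil>1 / h\<rceil>"
  proof -
    have "0 < 1 / h" using h by simp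
    then have "(0::real) \<le> real_of_int \<lceil>1 / h\<rceil>" using ceiling_correct[of "1/h"] by linarith
    then show ?thesis by simp
  qed
  ultimately have "real n \<le> 1 / h + 1" unfolding n_def by simp
  also have "\<dots> \<le> 2 / h" using h by (simp add: field_simps)
  finally have n2: "real n \<le> 2 / h" .
  have hs1: "1 \<le> h powr (\<sigma> - 1)"
  proof -
    have "h powr 0 \<le> h powr (\<sigma> - 1)" using h sig by (intro powr_mono') auto
    then show ?thesis using h by simp
  qed
  define c where "c = 2 * K * real q powr \<sigma> + 2"
  have "2 * K * (real q * h) powr \<sigma> / h = 2 * K * real q powr \<sigma> * (h powr \<sigma> / h)"
    by (simp add: powr_mult)
  also have "h powr \<sigma> / h = h powr (\<sigma> - 1)" using h by (simp add: powr_diff)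
  finally have "2 * K * (real q * h) powr \<sigma> / h + 2 \<le> 2 * K * real q powr \<sigma> * h powr (\<sigma> - 1) + 2 * h powr (\<sigma> - 1)"
    using hs1 by simp
  also have "\<dots> = c * h powr (\<sigma> - 1)" unfolding c_def by (simp add: algebra_simps)
  finally have inner: "2 * K * (real q * h) powr \<sigma> / h + 2 \<le> c * h powr (\<sigma> - 1)" .
  have c0: "0 \<le> c" unfolding c_def using K(1) by simp
  have "real (cover_number \<delta> E) \<le> real (card F)" using le by simp
  also have "\<dots> \<le> real n ^ q * (2 * K * (real q * h) powr \<sigma> / h + 2)" using F(4) unfolding n_def .
  also have "\<dots> \<le> (2 / h) ^ q * (c * h powr (\<sigma> - 1))"
    using n2 inner h K(1) by (intro mult_mono power_mono) auto
  also have "(2 / h) ^ q = 2 ^ q / h powr (real q)" using h by (simp add: power_divide powr_realpow)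
  also have "2 ^ q / h powr (real q) * (c * h powr (\<sigma> - 1)) = 2 ^ q * c * (h powr (\<sigma> - 1) / h powr (real q))"
    by simp
  also have "h powr (\<sigma> - 1) / h powr (real q) = h powr (- (real q + 1 - \<sigma>))"
    using h by (simp add: powr_diff[symmetric] algebra_simps)
  also have "h powr (- (real q + 1 - \<sigma>)) = \<delta> powr (- (real q + 1 - \<sigma>)) * (real q + 1) powr (real q + 1 - \<sigma>)"
  proof -
    have e: "(real q + 1) powr (- (real q + 1 - \<sigma>)) = 1 / (real q + 1) powr (real q + 1 - \<sigma>)"
      by (rule powr_minus_divide)
    show ?thesis unfolding h_def using d by (simp only: powr_divide e) simp
  qed
  finally show "real (cover_number \<delta> (graph_of unit_cube g)) \<le>
           (2 ^ CARD('q) * (2 * K * real CARD('q) powr \<sigma> + 2) * (real CARD('q) + 1) powr (real CARD('q) + 1 - \<sigma>))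
            * \<delta> powr (- (real CARD('q) + 1 - \<sigma>))"
    unfolding E_def c_def q_def by (simp add: algebra_simps)
qed



lemma ratio_bound:
  fixes N :: nat and C1 D \<delta> :: real
  assumes C1: "1 \<le> C1" and D: "0 \<le> D" and d: "0 < \<delta>" "\<delta> < 1" and N: "real N \<le> C1 * \<delta> powr (- D)"
  shows "ln (real N) / - ln \<delta> \<le> D + ln C1 / (- ln \<delta>)"
proof -
  have L: "0 < - ln \<delta>" using d by simp
  have lnC: "0 \<le> ln C1" using C1 by simp
  show ?thesis
  proof (cases "N = 0")
    case True
    have "0 \<le> ln C1 / (- ln \<delta>)" using lnC L by (rule divide_nonneg_pos)
    moreover have "ln (real N) / - ln \<delta> = 0" using True by simp
    ultimately show ?thesis using D by linarith
  next
    case False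
    then have "0 < real N" by simp
    then have "ln (real N) \<le> ln (C1 * \<delta> powr (- D))" using N C1 d by simp
    also have "\<dots> = ln C1 + D * (- ln \<delta>)" using C1 d by (simp add: ln_mult)
    finally have "ln (real N) / - ln \<delta> \<le> (ln C1 + D * (- ln \<delta>)) / - ln \<delta>" using L by (intro divide_right_mono) auto
    also have "\<dots> = D + ln C1 / (- ln \<delta>)" using L by (simp add: field_simps)
    finally show ?thesis .
  qed
qed

lemma upper_box_le:
  fixes g :: "real^'q::finite \<Rightarrow> real"
  assumes K: "0 \<le> K" "\<And>x y. x \<in> unit_cube \<Longrightarrow> y \<in> unit_cube \<Longrightarrow> \<bar>g x - g y\<bar> \<le> K * dist x y powr \<sigma>"
    and sig: "0 < \<sigma>" "\<sigma> \<le> 1"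
  shows "upper_box_dim (graph_of unit_cube g) \<le> ereal (real CARD('q) + 1 - \<sigma>)"
proof -
  define D where "D = real CARD('q) + 1 - \<sigma>"
  define C1 where "C1 = 2 ^ CARD('q) * (2 * K * real CARD('q) powr \<sigma> + 2) * (real CARD('q) + 1) powr (real CARD('q) + 1 - \<sigma>)"
  define E where "E = graph_of unit_cube g"
  have D0: "0 \<le> D" unfolding D_def using sig by simp
  have C1: "1 \<le> C1"
  proof -
    have a: "1 \<le> (2::real) ^ CARD('q)" by simp
    have b: "1 \<le> 2 * K * real CARD('q) powr \<sigma> + 2" using K(1) by simp
    have c: "1 \<le> (real CARD('q) + 1) powr (real CARD('q) + 1 - \<sigma>)" using sig by (intro ge_one_powr_ge_zero) auto
    have "1 * 1 * 1 \<le> 2 ^ CARD('q) * (2 * K * real CARD('q) powr \<sigma> + 2) * (real CARD('q) + 1) powr (real CARD('q) + 1 - \<sigma>)"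
      using a b c by (intro mult_mono) auto
    then show ?thesis unfolding C1_def by simp
  qed
  have rb: "ln (real (cover_number \<delta> E)) / - ln \<delta> \<le> D + ln C1 / (- ln \<delta>)" if d: "0 < \<delta>" "\<delta> < 1" for \<delta>
    using ratio_bound[OF C1 D0 d] cover_number_facts(2)[OF K sig d(1) less_imp_le[OF d(2)]]
    unfolding C1_def D_def E_def by simp
  have "upper_box_dim E \<le> ereal D + ereal e" if e: "0 < e" for e
  proof -
    define b where "b = min 1 (exp (- ln C1 / e))"
    have b0: "0 < b" unfolding b_def by simp
    have ev: "eventually (\<lambda>\<delta>. \<delta> \<in> {0<..<b}) (at_right (0::real))" using eventually_at_right_real[OF b0] .
    have "eventually (\<lambda>\<delta>. ereal (ln (real (cover_number \<delta> E)) / - ln \<delta>) \<le> ereal (D + e)) (at_right 0)"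
    proof (rule eventually_mono[OF ev])
      fix \<delta> :: real assume "\<delta> \<in> {0<..<b}"
      then have d: "0 < \<delta>" "\<delta> < 1" "\<delta> < exp (- ln C1 / e)" unfolding b_def by auto
      have L: "0 < - ln \<delta>" using d by simp
      have "ln \<delta> < - ln C1 / e" using d(1,3) by (metis ln_exp ln_less_cancel_iff exp_gt_zero)
      then have "ln C1 / e < - ln \<delta>" by linarith
      then have "ln C1 < e * (- ln \<delta>)" using e by (simp add: divide_less_eq mult.commute)
      then have "ln C1 \<le> e * (- ln \<delta>)" by linarith
      then have "ln C1 / (- ln \<delta>) \<le> e" by (subst pos_divide_le_eq[OF L])
      then show "ereal (ln (real (cover_number \<delta> E)) / - ln \<delta>) \<le> ereal (D + e)" using rb[OF d(1,2)] by simp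
    qed
    then have "upper_box_dim E \<le> ereal (D + e)" unfolding upper_box_dim_def by (rule Limsup_bounded)
    then show ?thesis by simp
  qed
  then have "upper_box_dim E \<le> ereal D" by (rule ereal_le_epsilon2)
  then show ?thesis unfolding E_def D_def .
qed

lemma lower_box_nonneg: "0 \<le> lower_box_dim E"
  unfolding lower_box_dim_def
proof (rule Liminf_bounded)
  show "eventually (\<lambda>\<delta>. 0 \<le> ereal (ln (real (cover_number \<delta> E)) / - ln \<delta>)) (at_right (0::real))"
  proof (rule eventually_mono[OF eventually_at_right_real[of 0 1]])
    fix \<delta> :: real assume "\<delta> \<in> {0<..<1}"
    then have L: "0 < - ln \<delta>" by simp
    have "0 \<le> ln (real (cover_number \<delta> E))" by (cases "cover_number \<delta> E = 0") auto
    then have "0 \<le> ln (real (cover_number \<delta> E)) / - ln \<delta>" using L by (rule divide_nonneg_pos)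
    then show "0 \<le> ereal (ln (real (cover_number \<delta> E)) / - ln \<delta>)" by (simp only: zero_ereal_def ereal_less_eq)
  qed simp
qed

lemma lower_le_upper: "lower_box_dim E \<le> upper_box_dim E"
  unfolding lower_box_dim_def upper_box_dim_def by (rule Liminf_le_Limsup) simp



lemma content_le_finite_cover:
  fixes E :: "'a::metric_space set"
  assumes F: "finite F" "E \<subseteq> \<Union>F" "\<forall>U\<in>F. bounded U \<and> diameter U \<le> \<delta>" and d: "\<delta> \<le> \<delta>'" "0 \<le> \<delta>" and s: "0 < s"
  shows "hausdorff_content s \<delta>' E \<le> ennreal (real (card F) * \<delta> powr s)"
proof -
  define N where "N = card F"
  obtain e where e: "bij_betw e {0..<N} F" unfolding N_def using ex_bij_betw_nat_finite[OF F(1)] by blast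
  define U where "U = (\<lambda>i. if i < N then e i else {})"
  have UF: "(\<Union>i. U i) = \<Union>F"
  proof -
    have "(\<Union>i. U i) = (\<Union>i\<in>{0..<N}. e i)" unfolding U_def by (auto split: if_splits)
    also have "\<dots> = \<Union>F" using e by (simp add: bij_betw_def)
    finally show ?thesis .
  qed
  have eF: "e i \<in> F" if "i < N" for i using e that by (auto simp: bij_betw_def)
  have Ub: "bounded (U i) \<and> diameter (U i) \<le> \<delta>'" for i
    using eF F(3) d unfolding U_def by (auto intro: order_trans)
  have "hausdorff_content s \<delta>' E \<le> (\<Sum>i. ennreal (diameter (U i) powr s))"
    unfolding hausdorff_content_def using F(2) UF Ub by (intro Inf_lower) blast
  also have "(\<Sum>i. ennreal (diameter (U i) powr s)) = (\<Sum>i\<in>{0..<N}. ennreal (diameter (U i) powr s))"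
    by (rule suminf_finite) (auto simp: U_def)
  also have "\<dots> \<le> (\<Sum>i\<in>{0..<N}. ennreal (\<delta> powr s))"
  proof (rule sum_mono)
    fix i assume "i \<in> {0..<N}"
    then have "e i \<in> F" using eF by simp
    then have "0 \<le> diameter (e i)" "diameter (e i) \<le> \<delta>" using F(3) diameter_ge_0 by auto
    then show "ennreal (diameter (U i) powr s) \<le> ennreal (\<delta> powr s)" using \<open>i \<in> {0..<N}\<close> s
      unfolding U_def by (intro ennreal_leI powr_mono2) auto
  qed
  also have "\<dots> = ennreal (real (card F) * \<delta> powr s)" unfolding N_def by (simp add: ennreal_of_nat_eq_real_of_nat ennreal_mult)
  finally show ?thesis .
qed



lemma hm_zero:
  fixes g :: "real^'q::finite \<Rightarrow> real"
  assumes K: "0 \<le> K" "\<And>x y. x \<in> unit_cube \<Longrightarrow> y \<in> unit_cube \<Longrightarrow> \<bar>g x - g y\<bar> \<le> K * dist x y powr \<sigma>"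
    and sig: "0 < \<sigma>" "\<sigma> \<le> 1" and ts: "t < s" "0 < s"
    and L: "lower_box_dim (graph_of unit_cube g) < ereal t"
  shows "hausdorff_measure s (graph_of unit_cube g) = 0"
proof -
  define E where "E = graph_of unit_cube g"
  define r where "r = (\<lambda>\<delta>::real. ln (real (cover_number \<delta> E)) / - ln \<delta>)"
  have "lower_box_dim E = Liminf (at_right 0) (\<lambda>\<delta>. ereal (r \<delta>))" unfolding lower_box_dim_def r_def ..
  then have "Liminf (at_right 0) (\<lambda>\<delta>. ereal (r \<delta>)) < ereal t" using L unfolding E_def by simp
  then have "\<not> (ereal t \<le> Liminf (at_right 0) (\<lambda>\<delta>. ereal (r \<delta>)))" by (simp only: not_le)
  then obtain y where y: "y < ereal t" "\<not> eventually (\<lambda>\<delta>. y < ereal (r \<delta>)) (at_right 0)"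
    unfolding le_Liminf_iff by blast
  have E0: "(0, g 0) \<in> E" unfolding E_def graph_of_def using zero_cube by blast
  have c0: "hausdorff_content s \<delta>' E = 0" if d': "0 < \<delta>'" for \<delta>'
  proof -
    have heta: "hausdorff_content s \<delta>' E \<le> 0 + ennreal \<eta>" if \<eta>: "0 < \<eta>" for \<eta>
    proof -
      define b where "b = min (min \<delta>' (1/2)) (\<eta> powr (1 / (s - t)))"
      have b0: "0 < b" unfolding b_def using d' \<eta> by simp
      have "\<exists>\<delta>. \<delta> \<in> {0<..<b} \<and> \<not> y < ereal (r \<delta>)"
      proof (rule ccontr)
        assume "\<not> ?thesis"
        then have "eventually (\<lambda>\<delta>. y < ereal (r \<delta>)) (at_right 0)"
          by (intro eventually_mono[OF eventually_at_right_real[OF b0]]) blast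
        then show False using y(2) by blast
      qed
      then obtain \<delta> where d: "0 < \<delta>" "\<delta> < b" and ry: "\<not> y < ereal (r \<delta>)" by auto
      have "ereal (r \<delta>) \<le> y" using ry by (simp add: not_less)
      then have "ereal (r \<delta>) < ereal t" using y(1) by (rule order_le_less_trans)
      then have rt: "r \<delta> < t" by simp
      have d1: "\<delta> < 1" "\<delta> \<le> \<delta>'" "\<delta> \<le> \<eta> powr (1 / (s - t))" using d unfolding b_def by auto
      obtain F where F: "finite F" "card F = cover_number \<delta> E" "E \<subseteq> \<Union>F" "\<forall>U\<in>F. bounded U \<and> diameter U \<le> \<delta>"
        using cover_number_facts(1)[OF K sig d(1) less_imp_le[OF d1(1)]] unfolding E_def by blast
      have "F \<noteq> {}" using F(3) E0 by auto
      then have Npos: "0 < real (card F)" using F(1) by (simp add: card_gt_0_iff)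
      have Lpos: "0 < - ln \<delta>" using d d1 by simp
      have "ln (real (card F)) < t * (- ln \<delta>)" using rt unfolding r_def F(2)[symmetric]
        by (subst (asm) pos_divide_less_eq[OF Lpos])
      also have "t * (- ln \<delta>) = ln (\<delta> powr (- t))" by simp
      finally have X: "ln (real (card F)) < ln (\<delta> powr (- t))" .
      have "0 < \<delta> powr (- t)" using d by simp
      from iffD1[OF ln_less_cancel_iff[OF Npos this] X] have "real (card F) < \<delta> powr (- t)" .
      then have "real (card F) * \<delta> powr s \<le> \<delta> powr (- t) * \<delta> powr s" by (intro mult_right_mono) auto
      also have "\<dots> = \<delta> powr (s - t)" by (simp add: powr_add[symmetric])
      also have "\<dots> \<le> (\<eta> powr (1 / (s - t))) powr (s - t)" using d d1 ts by (intro powr_mono2) auto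
      also have "\<dots> = \<eta>" using ts \<eta> by (simp add: powr_powr)
      finally have "real (card F) * \<delta> powr s \<le> \<eta>" .
      then have "ennreal (real (card F) * \<delta> powr s) \<le> ennreal \<eta>" by (rule ennreal_leI)
      moreover have "hausdorff_content s \<delta>' E \<le> ennreal (real (card F) * \<delta> powr s)"
        using content_le_finite_cover[OF F(1,3,4) d1(2) less_imp_le[OF d(1)] ts(2)] .
      ultimately show ?thesis by simp
    qed
    have "hausdorff_content s \<delta>' E \<le> 0" by (rule ennreal_le_epsilon, rule heta)
    then show ?thesis by simp
  qed
  have "hausdorff_measure s E = (SUP \<delta>\<in>{0::real<..}. (0::ennreal))" unfolding hausdorff_measure_def
    by (rule SUP_cong[OF refl]) (simp add: c0)
  also have "\<dots> = 0" by simp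
  finally show ?thesis unfolding E_def .
qed

lemma haus_le_lower:
  fixes g :: "real^'q::finite \<Rightarrow> real"
  assumes K: "0 \<le> K" "\<And>x y. x \<in> unit_cube \<Longrightarrow> y \<in> unit_cube \<Longrightarrow> \<bar>g x - g y\<bar> \<le> K * dist x y powr \<sigma>"
    and sig: "0 < \<sigma>" "\<sigma> \<le> 1"
  shows "hausdorff_dim (graph_of unit_cube g) \<le> lower_box_dim (graph_of unit_cube g)"
proof (rule ereal_le_epsilon2)
  fix e :: real assume e: "0 < e"
  have L0: "0 \<le> lower_box_dim (graph_of unit_cube g)" by (rule lower_box_nonneg)
  show "hausdorff_dim (graph_of unit_cube g) \<le> lower_box_dim (graph_of unit_cube g) + ereal e"
  proof (cases "lower_box_dim (graph_of unit_cube g)")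
    case (real l)
    have l0: "0 \<le> l" using L0 unfolding real by simp
    have lt: "lower_box_dim (graph_of unit_cube g) < ereal (l + e/2)" unfolding real using e by simp
    have ts: "l + e/2 < l + e" "0 < l + e" using e l0 by auto
    have "hausdorff_measure (l + e) (graph_of unit_cube g) = 0"
      by (rule hm_zero[OF K sig ts lt])
    then have "ereal (l + e) \<in> {ereal s |s. 0 < s \<and> hausdorff_measure s (graph_of unit_cube g) = 0}"
      using ts(2) by blast
    then have "hausdorff_dim (graph_of unit_cube g) \<le> ereal (l + e)" unfolding hausdorff_dim_def
      by (rule Inf_lower)
    moreover have "lower_box_dim (graph_of unit_cube g) + ereal e = ereal (l + e)" unfolding real by simp
    ultimately show ?thesis by simp
  next
    case PInf then show ?thesis by simp
  next
    case MInf then show ?thesis using L0 by simp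
  qed
qed



lemma emeasure_cbox_cart:
  fixes a b :: "real^'q::finite"
  assumes "cbox a b \<noteq> {}"
  shows "emeasure lborel (cbox a b) = ennreal (\<Prod>i\<in>UNIV. b$i - a$i)"
proof -
  have "emeasure lborel (cbox a b) \<noteq> top" using emeasure_lborel_cbox_finite[of a b] by simp
  then have "emeasure lborel (cbox a b) = ennreal (measure lborel (cbox a b))" by (rule emeasure_eq_ennreal_measure)
  also have "measure lborel (cbox a b) = (\<Prod>i\<in>UNIV. b$i - a$i)" using content_cbox_cart[OF assms] by simp
  finally show ?thesis .
qed

lemma pow_le_powr:
  fixes r s :: real
  assumes "0 \<le> r" "r \<le> 1" "0 < s" "s \<le> real n" "0 < n"
  shows "r ^ n \<le> r powr s"
proof (cases "r = 0")
  case True then show ?thesis using assms by (simp add: power_0_left)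
next
  case False
  then have "r ^ n = r powr real n" using assms by (simp add: powr_realpow)
  also have "\<dots> \<le> r powr s" using assms by (intro powr_mono') auto
  finally show ?thesis .
qed

lemma content_lower:
  fixes g :: "real^'q::finite \<Rightarrow> real"
  assumes s: "0 < s" "s \<le> real CARD('q)"
  shows "ennreal (1 / 2 ^ CARD('q)) \<le> hausdorff_content s 1 (graph_of unit_cube g)"
  unfolding hausdorff_content_def
proof (rule Inf_greatest)
  fix x assume "x \<in> {(\<Sum>n. ennreal (diameter (U n) powr s)) | U :: nat \<Rightarrow> ((real^'q) \<times> real) set.
            graph_of unit_cube g \<subseteq> (\<Union>n. U n) \<and> (\<forall>n. bounded (U n) \<and> diameter (U n) \<le> 1)}"
  then obtain U :: "nat \<Rightarrow> ((real^'q) \<times> real) set" where x: "x = (\<Sum>n. ennreal (diameter (U n) powr s))"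
    and cov: "graph_of unit_cube g \<subseteq> (\<Union>n. U n)" and bd: "\<And>n. bounded (U n)" "\<And>n. diameter (U n) \<le> 1"
    by blast
  define q where "q = CARD('q)"
  have q0: "0 < q" unfolding q_def by simp
  define c where "c = (\<lambda>i. fst (SOME p. p \<in> U i))"
  define r where "r = (\<lambda>i. diameter (U i))"
  have r0: "0 \<le> r i" for i unfolding r_def using bd(1) by (rule diameter_ge_0)
  define B where "B = (\<lambda>i. if U i = {} then {} else cbox (c i - r i *\<^sub>R 1) (c i + r i *\<^sub>R 1))"
  have inB: "y \<in> cbox (c i - r i *\<^sub>R 1) (c i + r i *\<^sub>R 1) \<longleftrightarrow> (\<forall>k. \<bar>y $ k - c i $ k\<bar> \<le> r i)" for y i
    by (auto simp: mem_box_cart abs_le_iff algebra_simps)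
  have cubeB: "unit_cube \<subseteq> (\<Union>i. B i)"
  proof
    fix y :: "real^'q" assume y: "y \<in> unit_cube"
    then have "(y, g y) \<in> graph_of unit_cube g" unfolding graph_of_def by blast
    then obtain i where i: "(y, g y) \<in> U i" using cov by blast
    define p0 where "p0 = (SOME p. p \<in> U i)"
    have p0: "p0 \<in> U i" unfolding p0_def using i by (rule someI)
    have "dist (y, g y) p0 \<le> r i" unfolding r_def using bd(1) i p0 by (rule diameter_bounded_bound)
    moreover have "dist y (fst p0) \<le> dist (y, g y) p0" using dist_fst_le[of "(y, g y)" p0] by simp
    ultimately have dy: "dist y (c i) \<le> r i" unfolding c_def p0_def[symmetric] by simp
    have "\<bar>y $ k - c i $ k\<bar> \<le> r i" for k
      using component_le_norm_cart[of "y - c i" k] dy by (simp add: dist_norm)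
    then have "y \<in> B i" unfolding B_def using i inB by auto
    then show "y \<in> (\<Union>i. B i)" by blast
  qed
  have Bsets: "B i \<in> sets lborel" for i unfolding B_def by auto
  have mB: "emeasure lborel (B i) \<le> ennreal (2 ^ q) * ennreal (diameter (U i) powr s)" for i
  proof (cases "U i = {}")
    case True then show ?thesis unfolding B_def by simp
  next
    case False
    have cin: "c i \<in> cbox (c i - r i *\<^sub>R 1) (c i + r i *\<^sub>R 1)" unfolding inB using r0 by simp
    have "emeasure lborel (B i) = emeasure lborel (cbox (c i - r i *\<^sub>R 1) (c i + r i *\<^sub>R 1))"
      unfolding B_def using False by simp
    also have "\<dots> = ennreal (\<Prod>k\<in>UNIV. (c i + r i *\<^sub>R 1) $ k - (c i - r i *\<^sub>R 1) $ k)"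
      using cin by (intro emeasure_cbox_cart) blast
    also have "(\<Prod>k\<in>UNIV. (c i + r i *\<^sub>R 1) $ k - (c i - r i *\<^sub>R 1) $ k) = (2 * r i) ^ q"
      unfolding q_def by simp
    also have "(2 * r i) ^ q = 2 ^ q * r i ^ q" by (simp add: power_mult_distrib)
    also have "\<dots> \<le> 2 ^ q * diameter (U i) powr s"
      using pow_le_powr[OF r0 _ s(1) _ q0, of i] bd(2)[of i] s(2) unfolding r_def q_def by simp
    finally show ?thesis by (simp add: ennreal_mult ennreal_leI)
  qed
  have "emeasure lborel (unit_cube :: (real^'q) set) = 1"
  proof -
    have "(unit_cube :: (real^'q) set) \<noteq> {}" using zero_cube by blast
    then show ?thesis unfolding unit_cube_def by (simp add: emeasure_cbox_cart)
  qed
  then have "1 \<le> emeasure lborel (\<Union>i. B i)" using cubeB Bsets by (metis emeasure_mono sets.countable_UN UNIV_I image_subset_iff)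
  also have "\<dots> \<le> (\<Sum>i. emeasure lborel (B i))" using Bsets by (intro emeasure_subadditive_countably) auto
  also have "\<dots> \<le> (\<Sum>i. ennreal (2 ^ q) * ennreal (diameter (U i) powr s))"
    using mB by (intro suminf_le summableI) auto
  also have "\<dots> = ennreal (2 ^ q) * x" unfolding x by simp
  finally have one: "1 \<le> ennreal (2 ^ q) * x" .
  have "ennreal (1 / 2 ^ q) = ennreal (1 / 2 ^ q) * 1" by simp
  also have "\<dots> \<le> ennreal (1 / 2 ^ q) * (ennreal (2 ^ q) * x)" using one by (rule mult_left_mono) simp
  also have "\<dots> = (ennreal (1 / 2 ^ q) * ennreal (2 ^ q)) * x" by (simp add: mult.assoc)
  also have "ennreal (1 / 2 ^ q) * ennreal (2 ^ q) = 1" by (simp flip: ennreal_mult)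
  finally show "ennreal (1 / 2 ^ CARD('q)) \<le> x" unfolding q_def by simp
qed

lemma q_le_haus:
  fixes g :: "real^'q::finite \<Rightarrow> real"
  shows "ereal (real CARD('q)) \<le> hausdorff_dim (graph_of unit_cube g)"
  unfolding hausdorff_dim_def
proof (rule Inf_greatest)
  fix x assume "x \<in> {ereal s |s. 0 < s \<and> hausdorff_measure s (graph_of unit_cube g) = 0}"
  then obtain s where x: "x = ereal s" and s: "0 < s" "hausdorff_measure s (graph_of unit_cube g) = 0" by blast
  show "ereal (real CARD('q)) \<le> x"
  proof (rule ccontr)
    assume "\<not> ?thesis"
    then have sq: "s \<le> real CARD('q)" unfolding x by simp
    have "ennreal (1 / 2 ^ CARD('q)) \<le> hausdorff_content s 1 (graph_of unit_cube g)" by (rule content_lower[OF s(1) sq])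
    also have "\<dots> \<le> hausdorff_measure s (graph_of unit_cube g)" unfolding hausdorff_measure_def
      by (rule SUP_upper) simp
    finally show False using s(2) by simp
  qed
qed



theorem theorem4p9:
  fixes M :: "'q::finite \<Rightarrow> nat" and xs :: "'q \<Rightarrow> nat \<Rightarrow> real"
    and f \<alpha> s g :: "real^'q \<Rightarrow> real" and \<sigma> :: real
  assumes part: "partition_data M xs"
    and sigma: "0 < \<sigma>" "\<sigma> \<le> 1"
    and hf: "holder_on \<sigma> unit_cube f"
    and ha: "holder_on \<sigma> unit_cube \<alpha>"
    and hs: "holder_on \<sigma> unit_cube s"
    and vert: "\<forall>x. (\<forall>k. x $ k = 0 \<or> x $ k = 1) \<longrightarrow> s x = f x"
    and cond: "max (sup_norm_on unit_cube \<alpha> /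
                    (Min {\<bar>acoef xs k i\<bar> | k i. 1 \<le> i \<and> i \<le> M k}) powr \<sigma>)
                   (sup_norm_on unit_cube \<alpha> + holder_seminorm \<sigma> unit_cube \<alpha>) < 1"
    and frac: "is_alpha_fractal M xs f \<alpha> s g"
  shows "holder_on \<sigma> unit_cube g
    \<and> ereal (real CARD('q)) \<le> hausdorff_dim (graph_of unit_cube g)
    \<and> hausdorff_dim (graph_of unit_cube g) \<le> lower_box_dim (graph_of unit_cube g)
    \<and> lower_box_dim (graph_of unit_cube g) \<le> upper_box_dim (graph_of unit_cube g)
    \<and> upper_box_dim (graph_of unit_cube g) \<le> ereal (real CARD('q) + 1 - \<sigma>)"
proof -
  have rho: "sup_norm_on unit_cube \<alpha> / amin M xs powr \<sigma> < 1"
    using cond unfolding amin_def by simp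
  have hg: "holder_on \<sigma> unit_cube g" by (rule holder_g[OF part sigma hf ha hs rho frac])
  obtain K where K: "0 \<le> K" "\<And>x y. x \<in> unit_cube \<Longrightarrow> y \<in> unit_cube \<Longrightarrow> \<bar>g x - g y\<bar> \<le> K * dist x y powr \<sigma>"
    using holder_nonneg[OF hg] by blast
  show ?thesis
    using hg q_le_haus[of g] haus_le_lower[OF K sigma] lower_le_upper[of "graph_of unit_cube g"]
      upper_box_le[OF K sigma] by blast
qed



end
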